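(* Let $A$ and $\Lambda$ be as in the context. Then every eigenvalue $\lambda$ of the $(n+1)\times(n+1)$ matrix $\Lambda A^T A$ is real and satisfies $0 \le \lambda \le 1$.
   Context: Let $n \le m$ be nonnegative integers. Let $B_0,\dots,B_n$ be real-valued basis functions (e.g. B-spline basis functions, tensor-product B-spline basis functions, or T-spline blending functions) that are nonnegative and form a partition of unity, i.e. $B_i(\mathbf t)\ge 0$ and $\sum_{i=0}^n B_i(\mathbf t)=1$ for every parameter $\mathbf t$. Let $\mathbf t_0,\dots,\mathbf t_m$ be parameter values assigned to data points, and assume that for every $i$ there is some $j$ with $B_i(\mathbf t_j)\neq 0$. Let $A$ be the $(m+1)\times(n+1)$ matrix with entries $A_{ji}=B_i(\mathbf t_j)$ ($j=0,\dots,m$, $i=0,\dots,n$). Let $\Lambda=\mathrm{diag}\big(1/\sum_{j=0}^m B_0(\mathbf t_j),\dots,1/\sum_{j=0}^m B_n(\mathbf t_j)\big)$, a diagonal matrix with positive diagonal entries. *)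

theory Defs
  imports Jordan_Normal_Form.Char_Poly
begin

definition colloc_mat :: "nat \<Rightarrow> nat \<Rightarrow> (nat \<Rightarrow> 'p \<Rightarrow> real) \<Rightarrow> (nat \<Rightarrow> 'p) \<Rightarrow> real mat" where
  "colloc_mat n m B t = mat (m+1) (n+1) (\<lambda>(j,i). B i (t j))"

definition Lambda_mat :: "nat \<Rightarrow> nat \<Rightarrow> (nat \<Rightarrow> 'p \<Rightarrow> real) \<Rightarrow> (nat \<Rightarrow> 'p) \<Rightarrow> real mat" where
  "Lambda_mat n m B t = mat (n+1) (n+1) (\<lambda>(i,k). if i = k then 1 / (\<Sum>j\<le>m. B i (t j)) else 0)"

end

theory Submission
  imports Defs
begin

lemma entry:
  assumes "i \<le> n" "k \<le> n"
  shows "(Lambda_mat n m B t * (transpose_mat (colloc_mat n m B t) * colloc_mat n m B t)) $$ (i,k)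
     = (1 / (\<Sum>j\<le>m. B i (t j))) * (\<Sum>j\<le>m. B i (t j) * B k (t j))"
proof -
  let ?A = "colloc_mat n m B t"
  have G: "(transpose_mat ?A * ?A) $$ (l,k) = (\<Sum>j\<le>m. B l (t j) * B k (t j))" if "l \<le> n" for l
    using that assms by (simp add: colloc_mat_def scalar_prod_def atLeast0LessThan lessThan_Suc_atMost)
  have "(Lambda_mat n m B t * (transpose_mat ?A * ?A)) $$ (i,k)
      = (\<Sum>l<n+1. (if i = l then 1 / (\<Sum>j\<le>m. B i (t j)) else 0) * (transpose_mat ?A * ?A) $$ (l,k))"
    using assms by (simp add: Lambda_mat_def colloc_mat_def scalar_prod_def atLeast0LessThan)
  also have "\<dots> = (1 / (\<Sum>j\<le>m. B i (t j))) * (transpose_mat ?A * ?A) $$ (i,k)"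
    using assms by (subst sum.cong[OF refl, where h="\<lambda>l. if l = i then (1 / (\<Sum>j\<le>m. B i (t j))) * (transpose_mat ?A * ?A) $$ (l,k) else 0"]) auto
  finally show ?thesis using G assms by simp
qed

lemma cs:
  fixes a x :: "nat \<Rightarrow> real"
  assumes "\<And>k. k \<in> I \<Longrightarrow> a k \<ge> 0" "sum a I = 1"
  shows "(\<Sum>k\<in>I. a k * x k)^2 \<le> (\<Sum>k\<in>I. a k * (x k)^2)"
proof -
  define \<mu> where "\<mu> = (\<Sum>k\<in>I. a k * x k)"
  have "0 \<le> (\<Sum>k\<in>I. a k * (x k - \<mu>)^2)"
    using assms by (intro sum_nonneg) auto
  also have "\<dots> = (\<Sum>k\<in>I. a k * (x k)^2) - 2*\<mu>*(\<Sum>k\<in>I. a k * x k) + \<mu>^2 * sum a I"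
    by (simp add: power2_eq_square algebra_simps sum.distrib sum_subtractf sum_distrib_left sum_distrib_right)
  finally show ?thesis using assms(2) by (simp add: \<mu>_def power2_eq_square)
qed

lemma cn: "cnj z * z = complex_of_real ((cmod z)^2)"
  by (metis complex_norm_square mult.commute)

theorem lemma1:
  fixes n m :: nat and lam :: complex and B :: "nat \<Rightarrow> 'p \<Rightarrow> real" and t :: "nat \<Rightarrow> 'p"
  assumes "n \<le> m"
    and "\<And>i x. i \<le> n \<Longrightarrow> B i x \<ge> 0"
    and "\<And>x. (\<Sum>i\<le>n. B i x) = 1"
    and "\<And>i. i \<le> n \<Longrightarrow> \<exists>j\<le>m. B i (t j) \<noteq> 0"
    and "eigenvalue (map_mat complex_of_real
           (Lambda_mat n m B t * (transpose_mat (colloc_mat n m B t) * colloc_mat n m B t))) lam"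
  shows "lam \<in> \<real> \<and> 0 \<le> Re lam \<and> Re lam \<le> 1"
proof -
  let ?M = "Lambda_mat n m B t * (transpose_mat (colloc_mat n m B t) * colloc_mat n m B t)"
  define b where "b j k = B k (t j)" for j k
  define s where "s i = (\<Sum>j\<le>m. b j i)" for i
  have dimM: "dim_row ?M = n+1" "dim_col ?M = n+1"
    by (simp_all add: Lambda_mat_def colloc_mat_def)
  obtain v where v: "v \<in> carrier_vec (n+1)" "v \<noteq> 0\<^sub>v (n+1)"
     "map_mat complex_of_real ?M *\<^sub>v v = lam \<cdot>\<^sub>v v"
    using assms(5) dimM unfolding eigenvalue_def eigenvector_def by auto
  have spos: "s i > 0" if ii: "i \<le> n" for i
  proof -
    obtain j where "j \<le> m" "B i (t j) \<noteq> 0" using assms(4)[OF ii] by blast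
    then have "b j i > 0" using assms(2)[OF ii] by (simp add: b_def order_less_le)
    then show ?thesis unfolding s_def
      using \<open>j \<le> m\<close> assms(2)[OF ii] by (intro sum_pos2[of _ j]) (auto simp: b_def)
  qed
  have comp: "(\<Sum>k\<le>n. complex_of_real (\<Sum>j\<le>m. b j i * b j k) * v$k) = lam * of_real (s i) * v$i"
    if i: "i \<le> n" for i
  proof -
    have "(map_mat complex_of_real ?M *\<^sub>v v) $ i = lam * v$i"
      using v i by simp
    moreover have "(map_mat complex_of_real ?M *\<^sub>v v) $ i
        = (\<Sum>k\<le>n. complex_of_real ((1 / s i) * (\<Sum>j\<le>m. b j i * b j k)) * v$k)"
    proof -
      have "(map_mat complex_of_real ?M *\<^sub>v v) $ i = (\<Sum>k\<in>{0..<n+1}. row (map_mat complex_of_real ?M) i $ k * v$k)"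
        using v(1) i dimM by (simp only: index_mult_mat_vec index_map_mat scalar_prod_def) auto
      also have "\<dots> = (\<Sum>k\<in>{0..<n+1}. complex_of_real ((1 / s i) * (\<Sum>j\<le>m. b j i * b j k)) * v$k)"
      proof (rule sum.cong[OF refl])
        fix k assume "k \<in> {0..<n+1}"
        then have k: "k \<le> n" by auto
        have "row (map_mat complex_of_real ?M) i $ k = complex_of_real (?M $$ (i,k))"
          using i k dimM by simp
        also have "\<dots> = complex_of_real ((1 / s i) * (\<Sum>j\<le>m. b j i * b j k))"
          by (subst entry[OF i k]) (simp add: b_def s_def)
        finally show "row (map_mat complex_of_real ?M) i $ k * v$k = complex_of_real ((1 / s i) * (\<Sum>j\<le>m. b j i * b j k)) * v$k" by simp
      qed
      also have "\<dots> = (\<Sum>k\<le>n. complex_of_real ((1 / s i) * (\<Sum>j\<le>m. b j i * b j k)) * v$k)"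
        by (simp only: atLeast0LessThan lessThan_Suc_atMost Suc_eq_plus1[symmetric])
      finally show ?thesis .
    qed
    ultimately have h1: "(\<Sum>k\<le>n. complex_of_real ((1 / s i) * (\<Sum>j\<le>m. b j i * b j k)) * v$k) = lam * v$i"
      by simp
    have h2: "of_real (s i) * (\<Sum>k\<le>n. complex_of_real ((1 / s i) * (\<Sum>j\<le>m. b j i * b j k)) * v$k)
       = (\<Sum>k\<le>n. complex_of_real (\<Sum>j\<le>m. b j i * b j k) * v$k)"
    proof -
      have c: "complex_of_real (s i) * complex_of_real ((1 / s i) * G) = complex_of_real G" for G
      proof -
        have "s i * ((1/s i) * G) = G" using spos[OF i] by simp
        then show ?thesis by (metis of_real_mult)
      qed
      show ?thesis by (simp only: sum_distrib_left[of "complex_of_real (s i)"] mult.assoc[symmetric, of "complex_of_real (s i)"] c)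
    qed
    show ?thesis using h1 h2 by (metis mult.commute mult.left_commute)
  qed
  define w where "w j = (\<Sum>k\<le>n. complex_of_real (b j k) * v$k)" for j
  define Q where "Q = (\<Sum>i\<le>n. s i * (cmod (v$i))^2)"
  define S where "S = (\<Sum>j\<le>m. (cmod (w j))^2)"
  have "lam * of_real Q = (\<Sum>i\<le>n. cnj (v$i) * (lam * of_real (s i) * v$i))"
    unfolding Q_def of_real_sum sum_distrib_left
  proof (rule sum.cong[OF refl])
    fix i
    have "cnj (v$i) * (lam * of_real (s i) * v$i) = lam * of_real (s i) * (cnj (v$i) * v$i)"
      by (simp add: mult_ac)
    also have "\<dots> = lam * complex_of_real (s i * (cmod (v$i))^2)" by (simp only: cn of_real_mult mult.assoc)
    finally show "lam * complex_of_real (s i * (cmod (v$i))^2) = cnj (v$i) * (lam * of_real (s i) * v$i)" by (rule sym)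
  qed
  also have "\<dots> = (\<Sum>i\<le>n. cnj (v$i) * (\<Sum>k\<le>n. complex_of_real (\<Sum>j\<le>m. b j i * b j k) * v$k))"
    using comp by simp
  also have "\<dots> = (\<Sum>i\<le>n. \<Sum>k\<le>n. \<Sum>j\<le>m. cnj (v$i) * of_real (b j i) * of_real (b j k) * v$k)"
    by (simp add: sum_distrib_left sum_distrib_right mult_ac)
  also have "\<dots> = (\<Sum>i\<le>n. \<Sum>j\<le>m. \<Sum>k\<le>n. cnj (v$i) * of_real (b j i) * of_real (b j k) * v$k)"
    by (rule sum.cong[OF refl], rule sum.swap)
  also have "\<dots> = (\<Sum>j\<le>m. \<Sum>i\<le>n. \<Sum>k\<le>n. cnj (v$i) * of_real (b j i) * of_real (b j k) * v$k)"
    by (rule sum.swap)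
  also have "\<dots> = (\<Sum>j\<le>m. cnj (w j) * w j)"
    unfolding w_def cnj_sum complex_cnj_mult complex_cnj_complex_of_real sum_product
    by (simp add: mult_ac)
  also have "\<dots> = of_real S"
    by (simp only: S_def of_real_sum cn)
  finally have eq: "lam * of_real Q = of_real S" .
  obtain i where i: "i < n+1" "v$i \<noteq> 0"
    using v by (metis carrier_vecD eq_vecI index_zero_vec(1) index_zero_vec(2))
  have Qpos: "Q > 0" unfolding Q_def
  proof (rule sum_pos2[of _ i])
    show "finite {..n}" by simp
    show "i \<in> {..n}" using i by simp
    show "0 < s i * (cmod (v$i))^2" using i spos[of i] by simp
    show "\<And>k. k \<in> {..n} \<Longrightarrow> 0 \<le> s k * (cmod (v$k))^2"
      using spos by (simp add: less_imp_le)
  qed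
  have lamQ: "lam = of_real (S / Q)"
    using eq Qpos by (simp add: field_simps)
  have S0: "S \<ge> 0" unfolding S_def by (simp add: sum_nonneg)
  have wle: "(cmod (w j))^2 \<le> (\<Sum>k\<le>n. b j k * (cmod (v$k))^2)" for j
  proof -
    have "cmod (w j) \<le> (\<Sum>k\<le>n. b j k * cmod (v$k))"
      unfolding w_def by (rule order_trans[OF norm_sum]) (simp add: norm_mult b_def assms(2))
    then have "(cmod (w j))^2 \<le> (\<Sum>k\<le>n. b j k * cmod (v$k))^2"
      by (simp add: power_mono)
    also have "\<dots> \<le> (\<Sum>k\<le>n. b j k * (cmod (v$k))^2)"
      by (rule cs) (auto simp: b_def assms(2,3))
    finally show ?thesis .
  qed
  have "S \<le> (\<Sum>j\<le>m. \<Sum>k\<le>n. b j k * (cmod (v$k))^2)"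
    unfolding S_def by (rule sum_mono) (rule wle)
  also have "\<dots> = Q"
    unfolding Q_def s_def by (simp add: sum.swap[of _ "{..m}"] sum_distrib_right)
  finally have "S \<le> Q" .
  then show ?thesis using lamQ Qpos S0 by simp
qed

end
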